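(* Let $A$ be a flat layout and $N$ a positive integer. There exists an $N$-complement of $A$ if and only if $A$ is $N$-complementable.
   Context: A flat layout $L=(s_1,\dots,s_m):(d_1,\dots,d_m)$ has positive integer shape entries and nonnegative integer stride entries; $\mathrm{size}(L)=\prod s_i$, $\mathrm{cosize}(L)=1+\sum(s_i-1)d_i$; layout function $\Phi_L(x)=\sum x_id_i$, $x_i=\lfloor x/(s_1\cdots s_{i-1})\rfloor\bmod s_i$, on $[0,\mathrm{size}(L))$. $L$ is compact if $\Phi_L:[0,\mathrm{size}(L))\to[0,\mathrm{cosize}(L))$ is bijective. $A\star B$ denotes concatenation of shapes and of strides. A flat layout $B$ is an $N$-complement of $A$ if $A\star B$ is compact and $\mathrm{size}(A)\cdot\mathrm{size}(B)=N$. $\mathrm{squeeze}$ removes modes with $s_i=1$; $\mathrm{sort}$ stably reorders modes into nondecreasing order for $s:d\preceq s':d'$ iff $d<d'$ or ($d=d'$, $s\le s'$). $A$ is $N$-complementable if, writing $\mathrm{sort}(\mathrm{squeeze}(A))=(s_1,\dots,s_m):(d_1,\dots,d_m)$, $s_id_i\mid d_{i+1}$ for all $1\le i<m$ and $s_md_m\mid N$. *)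

theory Defs
  imports Main "HOL-Library.Product_Lexorder"
begin

text \<open>A flat layout (s_1,...,s_m):(d_1,...,d_m) is represented as the list of
  modes [(s_1,d_1),...,(s_m,d_m)] :: (nat \<times> nat) list (shape, stride).\<close>

type_synonym layout = "(nat \<times> nat) list"

definition flat_layout :: "layout \<Rightarrow> bool" where
  "flat_layout L \<longleftrightarrow> (\<forall>m\<in>set L. fst m > 0)"

definition shapes :: "layout \<Rightarrow> nat list" where
  "shapes L = map fst L"

definition strides :: "layout \<Rightarrow> nat list" where
  "strides L = map snd L"

definition lsize :: "layout \<Rightarrow> nat" where
  "lsize L = prod_list (shapes L)"

definition lcosize :: "layout \<Rightarrow> nat" where
  "lcosize L = 1 + (\<Sum>i<length L. (shapes L ! i - 1) * strides L ! i)"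

definition coord :: "layout \<Rightarrow> nat \<Rightarrow> nat \<Rightarrow> nat" where
  "coord L x i = (x div prod_list (take i (shapes L))) mod (shapes L ! i)"

definition layout_fun :: "layout \<Rightarrow> nat \<Rightarrow> nat" where
  "layout_fun L x = (\<Sum>i<length L. coord L x i * strides L ! i)"

definition compact :: "layout \<Rightarrow> bool" where
  "compact L \<longleftrightarrow> bij_betw (layout_fun L) {0..<lsize L} {0..<lcosize L}"

definition concat_layout :: "layout \<Rightarrow> layout \<Rightarrow> layout" where
  "concat_layout A B = A @ B"

definition is_complement :: "nat \<Rightarrow> layout \<Rightarrow> layout \<Rightarrow> bool" where
  "is_complement N A B \<longleftrightarrow> flat_layout B \<and> compact (concat_layout A B)
     \<and> lsize A * lsize B = N"

definition squeeze :: "layout \<Rightarrow> layout" where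
  "squeeze L = filter (\<lambda>m. fst m \<noteq> 1) L"

text \<open>Stable sort w.r.t. s:d \<preceq> s':d' iff d < d' or (d = d' and s \<le> s'),
  i.e. lexicographic order on (d, s).\<close>
definition sort_layout :: "layout \<Rightarrow> layout" where
  "sort_layout L = sort_key (\<lambda>(s, d). (d, s)) L"

definition complementable :: "nat \<Rightarrow> layout \<Rightarrow> bool" where
  "complementable N A \<longleftrightarrow>
     (let L = sort_layout (squeeze A); m = length L in
       (\<forall>i. i + 1 < m \<longrightarrow> fst (L ! i) * snd (L ! i) dvd snd (L ! (i + 1))) \<and>
       (m > 0 \<longrightarrow> fst (L ! (m - 1)) * snd (L ! (m - 1)) dvd N))"

end

theory Submission
  imports Defs "HOL-Library.Multiset"
begin

definition msum :: "nat set \<Rightarrow> nat set \<Rightarrow> nat set" where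
  "msum X Y = {a + b | a b. a \<in> X \<and> b \<in> Y}"

definition cell :: "nat \<times> nat \<Rightarrow> nat set" where
  "cell m = {a * snd m | a. a < fst m}"

fun SS :: "layout \<Rightarrow> nat set" where
  "SS [] = {0}"
| "SS (m # L) = msum (cell m) (SS L)"

definition cs :: "layout \<Rightarrow> nat" where
  "cs L = sum_list (map (\<lambda>m. (fst m - 1) * snd m) L)"

definition sz :: "layout \<Rightarrow> nat" where
  "sz L = prod_list (map fst L)"

fun canon :: "nat \<Rightarrow> layout \<Rightarrow> bool" where
  "canon p [] = True"
| "canon p (m # C) = (snd m = p \<and> canon (p * fst m) C)"

definition good :: "layout \<Rightarrow> bool" where
  "good L \<longleftrightarrow> SS L = {0..<1 + cs L} \<and> card (SS L) = sz L"

lemma msum_iff: "v \<in> msum X Y \<longleftrightarrow> (\<exists>a\<in>X. \<exists>b\<in>Y. v = a + b)"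
  unfolding msum_def by auto

lemma msum_comm: "msum X Y = msum Y X"
  unfolding msum_iff set_eq_iff using add.commute by blast

lemma msum_assoc: "msum (msum X Y) Z = msum X (msum Y Z)"
proof (rule set_eqI)
  fix v
  show "v \<in> msum (msum X Y) Z \<longleftrightarrow> v \<in> msum X (msum Y Z)"
  proof -
    have 1: "v \<in> msum (msum X Y) Z \<longleftrightarrow> (\<exists>x\<in>X. \<exists>y\<in>Y. \<exists>z\<in>Z. v = x + y + z)"
      unfolding msum_def by blast
    have 2: "v \<in> msum X (msum Y Z) \<longleftrightarrow> (\<exists>x\<in>X. \<exists>y\<in>Y. \<exists>z\<in>Z. v = x + (y + z))"
      unfolding msum_def by blast
    show ?thesis unfolding 1 2 by (simp add: add.assoc)
  qed
qed

lemma msum_lcomm: "msum X (msum Y Z) = msum Y (msum X Z)"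
  by (simp only: msum_assoc[symmetric] msum_comm[of X Y])

lemma msum_zero[simp]: "msum {0} X = X"
  unfolding msum_def by auto

lemma msum_image: "msum X Y = (\<lambda>(a,b). a + b) ` (X \<times> Y)"
  unfolding msum_def by auto

lemma finite_cell[simp]: "finite (cell m)"
proof -
  have "cell m = (\<lambda>a. a * snd m) ` {0..<fst m}" unfolding cell_def by auto
  then show ?thesis by simp
qed

lemma card_cell: "card (cell m) \<le> fst m"
proof -
  have "cell m = (\<lambda>a. a * snd m) ` {0..<fst m}" unfolding cell_def by auto
  then show ?thesis by (metis card_atLeastLessThan card_image_le finite_atLeastLessThan minus_nat.diff_0)
qed

lemma finite_msum[simp]: "finite X \<Longrightarrow> finite Y \<Longrightarrow> finite (msum X Y)"
  unfolding msum_image by simp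

lemma card_msum: "finite X \<Longrightarrow> finite Y \<Longrightarrow> card (msum X Y) \<le> card X * card Y"
  unfolding msum_image by (metis card_cartesian_product card_image_le finite_cartesian_product)

lemma finite_SS[simp]: "finite (SS L)"
  by (induction L) auto

lemma card_SS: "card (SS L) \<le> sz L"
proof (induction L)
  case Nil then show ?case by (simp add: sz_def)
next
  case (Cons m L)
  have "card (SS (m # L)) \<le> card (cell m) * card (SS L)" by (simp add: card_msum)
  also have "\<dots> \<le> fst m * sz L" using Cons card_cell by (simp add: mult_le_mono)
  finally show ?case by (simp add: sz_def)
qed

lemma SS_append: "SS (xs @ ys) = msum (SS xs) (SS ys)"
  by (induction xs) (auto simp: msum_assoc)

lemma SS_mset: "mset xs = mset ys \<Longrightarrow> SS xs = SS ys"
proof (induction xs arbitrary: ys)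
  case Nil then show ?case by simp
next
  case (Cons x xs)
  then have "x \<in> set ys" by (metis list.set_intros(1) set_mset_mset)
  then obtain ys1 ys2 where ys: "ys = ys1 @ x # ys2" by (meson split_list)
  have "mset xs = mset (ys1 @ ys2)" using Cons.prems ys by simp
  then have "SS xs = SS (ys1 @ ys2)" using Cons.IH by blast
  then show ?case using ys by (simp add: SS_append msum_lcomm)
qed

lemma cs_mset: assumes "mset xs = mset ys" shows "cs xs = cs ys"
proof -
  have "mset (map (\<lambda>m. (fst m - 1) * snd m) xs) = mset (map (\<lambda>m. (fst m - 1) * snd m) ys)"
    using assms by simp
  then have "sum_mset (mset (map (\<lambda>m. (fst m - 1) * snd m) xs)) = sum_mset (mset (map (\<lambda>m. (fst m - 1) * snd m) ys))"
    by simp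
  then show ?thesis unfolding cs_def sum_mset_sum_list .
qed

lemma sz_mset: assumes "mset xs = mset ys" shows "sz xs = sz ys"
proof -
  have "mset (map fst xs) = mset (map fst ys)" using assms by simp
  then have "prod_mset (mset (map fst xs)) = prod_mset (mset (map fst ys))" by simp
  then show ?thesis unfolding sz_def prod_mset_prod_list .
qed

lemma good_mset: "mset xs = mset ys \<Longrightarrow> good xs = good ys"
  unfolding good_def using SS_mset cs_mset sz_mset by metis

lemma cell_one: "cell (1, d) = {0}"
  unfolding cell_def by auto

lemma SS_squeeze: "SS (squeeze L) = SS L"
  unfolding squeeze_def
proof (induction L)
  case Nil then show ?case by simp
next
  case (Cons m L)
  show ?case
  proof (cases "fst m = 1")
    case True
    then have "cell m = {0}" unfolding cell_def by auto
    then show ?thesis using Cons True by simp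
  next
    case False
    then show ?thesis using Cons by simp
  qed
qed

lemma cs_squeeze: "cs (squeeze L) = cs L"
  unfolding squeeze_def cs_def by (induction L) auto

lemma sz_squeeze: "sz (squeeze L) = sz L"
  unfolding squeeze_def sz_def by (induction L) auto

lemma good_squeeze: "good (squeeze L) = good L"
  unfolding good_def by (simp add: SS_squeeze cs_squeeze sz_squeeze)

lemma lsize_sz: "lsize L = sz L"
  unfolding lsize_def sz_def shapes_def by simp

lemma lcosize_cs: "lcosize L = 1 + cs L"
  unfolding lcosize_def cs_def shapes_def strides_def
  by (simp add: sum_list_sum_nth atLeast0LessThan)

lemma coord_Cons0: "coord (m # L) x 0 = x mod fst m"
  unfolding coord_def shapes_def by simp

lemma coord_ConsS: "coord (m # L) x (Suc i) = coord L (x div fst m) i"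
  unfolding coord_def shapes_def by (simp add: div_mult2_eq)

lemma layout_fun_Nil: "layout_fun [] x = 0"
  unfolding layout_fun_def by simp

lemma layout_fun_Cons: "layout_fun (m # L) x = (x mod fst m) * snd m + layout_fun L (x div fst m)"
  unfolding layout_fun_def
  by (simp only: length_Cons sum.lessThan_Suc_shift) (simp add: coord_Cons0 coord_ConsS strides_def)

lemma layout_fun_image:
  "flat_layout L \<Longrightarrow> layout_fun L ` {0..<lsize L} = SS L"
proof (induction L)
  case Nil then show ?case by (simp add: layout_fun_Nil lsize_def shapes_def)
next
  case (Cons m L)
  have s: "fst m > 0" using Cons.prems by (simp add: flat_layout_def)
  have IH: "layout_fun L ` {0..<lsize L} = SS L"
    using Cons by (simp add: flat_layout_def)
  have ls: "lsize (m # L) = fst m * lsize L" by (simp add: lsize_def shapes_def)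
  show ?case
  proof
    show "layout_fun (m # L) ` {0..<lsize (m # L)} \<subseteq> SS (m # L)"
    proof
      fix v assume "v \<in> layout_fun (m # L) ` {0..<lsize (m # L)}"
      then obtain x where x: "x < fst m * lsize L" "v = (x mod fst m) * snd m + layout_fun L (x div fst m)"
        using ls by (auto simp: layout_fun_Cons)
      have "x div fst m < lsize L" using x(1) s by (simp add: div_less_iff_less_mult mult.commute)
      then have "layout_fun L (x div fst m) \<in> SS L" using IH by auto
      moreover have "(x mod fst m) * snd m \<in> cell m" using s unfolding cell_def by auto
      ultimately show "v \<in> SS (m # L)" using x(2) unfolding SS.simps msum_iff by blast
    qed
  next
    show "SS (m # L) \<subseteq> layout_fun (m # L) ` {0..<lsize (m # L)}"
    proof
      fix v assume "v \<in> SS (m # L)"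
      then obtain a w where aw: "a < fst m" "w \<in> SS L" "v = a * snd m + w"
        unfolding SS.simps msum_iff cell_def by blast
      have "w \<in> layout_fun L ` {0..<lsize L}" using IH aw(2) by simp
      then obtain y where y: "y < lsize L" "w = layout_fun L y" by auto
      define x where "x = a + fst m * y"
      have "x mod fst m = a" "x div fst m = y" using aw(1) s unfolding x_def by auto
      moreover have "x < fst m * lsize L"
      proof -
        have "fst m * Suc y \<le> fst m * lsize L" using y(1) by (intro mult_le_mono2) simp
        then have "fst m * y + fst m \<le> fst m * lsize L" by simp
        then show ?thesis unfolding x_def using aw(1) by linarith
      qed
      ultimately show "v \<in> layout_fun (m # L) ` {0..<lsize (m # L)}"
        using aw(3) y(2) ls by (auto simp: layout_fun_Cons intro!: image_eqI[where x = x])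
    qed
  qed
qed

lemma compact_good: "flat_layout L \<Longrightarrow> compact L \<longleftrightarrow> good L"
proof -
  assume f: "flat_layout L"
  have "compact L \<longleftrightarrow> inj_on (layout_fun L) {0..<lsize L} \<and> SS L = {0..<lcosize L}"
    unfolding compact_def bij_betw_def using layout_fun_image[OF f] by simp
  also have "\<dots> \<longleftrightarrow> card (SS L) = lsize L \<and> SS L = {0..<lcosize L}"
    using inj_on_iff_eq_card[of "{0..<lsize L}" "layout_fun L"] layout_fun_image[OF f] by simp
  finally show ?thesis unfolding good_def lsize_sz lcosize_cs by blast
qed


lemma SS_Cons_mset: "mset M = mset (m # M0) \<Longrightarrow> SS M = msum (cell m) (SS M0)"
  using SS_mset by (metis SS.simps(2))

lemma mem_decomp: "m \<in> set M \<Longrightarrow> \<exists>M0. mset M = mset (m # M0)"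
proof -
  assume "m \<in> set M"
  then obtain ys1 ys2 where "M = ys1 @ m # ys2" by (meson split_list)
  then have "mset M = mset (m # (ys1 @ ys2))" by simp
  then show ?thesis by blast
qed

lemma sz_Cons: "sz (m # L) = fst m * sz L" by (simp add: sz_def)
lemma cs_Cons: "cs (m # L) = (fst m - 1) * snd m + cs L" by (simp add: cs_def)

lemma sz_pos: "\<forall>m\<in>set M. fst m > 0 \<Longrightarrow> sz M > 0"
  unfolding sz_def by (induction M) auto

lemma canon_ge: "canon p C \<Longrightarrow> p > 0 \<Longrightarrow> \<forall>m\<in>set C. fst m > 0 \<Longrightarrow> \<forall>m\<in>set C. p \<le> snd m \<and> p dvd snd m"
proof (induction C arbitrary: p)
  case Nil then show ?case by simp
next
  case (Cons c C)
  have c: "snd c = p" "canon (p * fst c) C" using Cons.prems by auto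
  have "p * fst c > 0" using Cons.prems by auto
  then have "\<forall>m\<in>set C. p * fst c \<le> snd m \<and> p * fst c dvd snd m"
    using Cons.IH c Cons.prems by auto
  moreover have "p \<le> p * fst c" using Cons.prems by auto
  ultimately have "\<forall>m\<in>set C. p \<le> snd m \<and> p dvd snd m"
    by (meson dvd_mult_left dvd_trans le_trans dvd_triv_left)
  then show ?case using c by simp
qed

lemma block_eq: "s > 0 \<Longrightarrow> msum {a * p | a. a < s} ((\<lambda>k. p * s * k) ` {0..<n}) = (\<lambda>k. p * k) ` {0..<s * n}"
proof (rule set_eqI)
  fix v assume s: "s > 0"
  show "v \<in> msum {a * p | a. a < s} ((\<lambda>k. p * s * k) ` {0..<n}) \<longleftrightarrow> v \<in> (\<lambda>k. p * k) ` {0..<s * n}"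
  proof
    assume "v \<in> msum {a * p | a. a < s} ((\<lambda>k. p * s * k) ` {0..<n})"
    then obtain a k where ak: "a < s" "k < n" "v = a * p + p * s * k" unfolding msum_iff by auto
    have "a + s * k < s * n"
    proof -
      have "s * Suc k \<le> s * n" using ak(2) by (intro mult_le_mono2) simp
      then have "s * k + s \<le> s * n" by simp
      then show ?thesis using ak(1) by linarith
    qed
    moreover have "v = p * (a + s * k)" using ak(3) by (simp add: algebra_simps)
    ultimately show "v \<in> (\<lambda>k. p * k) ` {0..<s * n}" by auto
  next
    assume "v \<in> (\<lambda>k. p * k) ` {0..<s * n}"
    then obtain x where x: "x < s * n" "v = p * x" by auto
    obtain q r where qr: "q = x mod s" "r = x div s" by blast
    have "q < s" unfolding qr using s by simp
    moreover have "r < n" unfolding qr using x(1) s by (simp add: div_less_iff_less_mult mult.commute)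
    moreover have "v = q * p + p * s * r"
    proof -
      have "x = q + s * r" unfolding qr by simp
      then show ?thesis using x(2) by (simp add: algebra_simps)
    qed
    ultimately have "q * p \<in> {a * p | a. a < s}" "p * s * r \<in> (\<lambda>k. p * s * k) ` {0..<n}"
      "v = q * p + p * s * r" by auto
    then show "v \<in> msum {a * p | a. a < s} ((\<lambda>k. p * s * k) ` {0..<n})"
      unfolding msum_iff by blast
  qed
qed

lemma canon_SS: "canon p C \<Longrightarrow> \<forall>m\<in>set C. fst m > 0 \<Longrightarrow>
   SS C = (\<lambda>k. p * k) ` {0..<sz C} \<and> cs C + p = p * sz C"
proof (induction C arbitrary: p)
  case Nil then show ?case by (simp add: sz_def cs_def)
next
  case (Cons c C)
  have c: "snd c = p" "canon (p * fst c) C" using Cons.prems by auto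
  have IH: "SS C = (\<lambda>k. p * fst c * k) ` {0..<sz C}" "cs C + p * fst c = p * fst c * sz C"
    using Cons.IH[OF c(2)] Cons.prems by auto
  have s: "fst c > 0" using Cons.prems by auto
  have cc: "cell c = {a * p | a. a < fst c}" unfolding cell_def using c(1) by simp
  have "SS (c # C) = msum {a * p | a. a < fst c} ((\<lambda>k. p * fst c * k) ` {0..<sz C})"
    using IH(1) cc by simp
  also have "\<dots> = (\<lambda>k. p * k) ` {0..<fst c * sz C}" using block_eq[OF s] by simp
  finally have 1: "SS (c # C) = (\<lambda>k. p * k) ` {0..<sz (c # C)}" by (simp add: sz_Cons)
  have "cs (c # C) + p = (fst c - 1) * p + p + cs C" using c by (simp add: cs_Cons)
  also have "(fst c - 1) * p + p = p * fst c"
  proof -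
    obtain k where "fst c = Suc k" using s by (cases "fst c") auto
    then show ?thesis by simp
  qed
  finally have "cs (c # C) + p = p * sz (c # C)" using IH(2) by (simp add: sz_Cons algebra_simps)
  with 1 show ?case by blast
qed

lemma canon_good: "canon 1 C \<Longrightarrow> \<forall>m\<in>set C. fst m > 0 \<Longrightarrow> good C"
proof -
  assume a: "canon 1 C" "\<forall>m\<in>set C. fst m > 0"
  from canon_SS[OF a] have "SS C = {0..<sz C}" "cs C + 1 = sz C" by auto
  moreover then have "card (SS C) = sz C" by simp
  ultimately show "good C" unfolding good_def by simp
qed

lemma SS_pos: "v \<in> SS M \<Longrightarrow> v = 0 \<or> (\<exists>m\<in>set M. 0 < snd m \<and> snd m \<le> v)"
proof (induction M arbitrary: v)
  case Nil then show ?case by simp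
next
  case (Cons m M)
  then obtain a w where aw: "a < fst m" "w \<in> SS M" "v = a * snd m + w"
    unfolding SS.simps msum_iff cell_def by blast
  show ?case
  proof (cases "w = 0")
    case True
    then show ?thesis using aw by (cases "a = 0") auto
  next
    case False
    then show ?thesis using Cons.IH[OF aw(2)] aw by auto
  qed
qed


lemma card_le_interval: "X \<subseteq> {0..<k} \<Longrightarrow> card X \<le> (k::nat)"
proof -
  assume "X \<subseteq> {0..<k}"
  then have "card X \<le> card {0..<k}" by (intro card_mono) auto
  then show ?thesis by simp
qed

lemma two_cells_card:
  assumes "d2 < s1" "s2 \<ge> 2"
  shows "card (msum (cell (s1, 1)) (cell (s2, d2))) < s1 * s2"
proof -
  have "msum (cell (s1, 1)) (cell (s2, d2)) \<subseteq> {0..<s1 + (s2 - 1) * d2}"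
  proof
    fix v assume "v \<in> msum (cell (s1, 1)) (cell (s2, d2))"
    then obtain a b where ab: "a < s1" "b < s2" "v = a + b * d2"
      unfolding msum_iff cell_def by auto
    have "b * d2 \<le> (s2 - 1) * d2" using ab(2) by (intro mult_le_mono1) linarith
    then have "a + b * d2 < s1 + (s2 - 1) * d2" using ab(1) by linarith
    then show "v \<in> {0..<s1 + (s2 - 1) * d2}" using ab(3) by simp
  qed
  then have A: "card (msum (cell (s1, 1)) (cell (s2, d2))) \<le> s1 + (s2 - 1) * d2"
    by (rule card_le_interval)
  have B: "(s2 - 1) * d2 < (s2 - 1) * s1" using assms by simp
  have C: "s1 + (s2 - 1) * s1 = s1 * s2"
  proof -
    obtain b where "s2 = Suc b" using assms by (cases s2) auto
    then show ?thesis by simp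
  qed
  from A B C show ?thesis by linarith
qed

lemma merge_cells: "s1 > 0 \<Longrightarrow> msum (cell (s1, 1)) (cell (s2, s1)) = cell (s1 * s2, 1)"
proof (rule set_eqI)
  fix v assume s1: "s1 > 0"
  show "v \<in> msum (cell (s1, 1)) (cell (s2, s1)) \<longleftrightarrow> v \<in> cell (s1 * s2, 1)"
  proof
    assume "v \<in> msum (cell (s1, 1)) (cell (s2, s1))"
    then obtain a b where ab: "a < s1" "b < s2" "v = a + b * s1" unfolding msum_iff cell_def by auto
    have "Suc b * s1 \<le> s2 * s1" using ab(2) by (intro mult_le_mono1) simp
    then have "b * s1 + s1 \<le> s1 * s2" by (simp add: mult.commute)
    then have "v < s1 * s2" using ab by linarith
    then show "v \<in> cell (s1 * s2, 1)" unfolding cell_def by simp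
  next
    assume "v \<in> cell (s1 * s2, 1)"
    then have v: "v < s1 * s2" unfolding cell_def by auto
    have "v mod s1 < s1" using s1 by simp
    moreover have "v div s1 < s2" using v s1 by (simp add: div_less_iff_less_mult mult.commute)
    moreover have "v = v mod s1 + (v div s1) * s1" by simp
    ultimately have "v mod s1 \<in> cell (s1, 1)" "(v div s1) * s1 \<in> cell (s2, s1)"
      "v = v mod s1 + (v div s1) * s1" unfolding cell_def by auto
    then show "v \<in> msum (cell (s1, 1)) (cell (s2, s1))"
      unfolding msum_iff by blast
  qed
qed

lemma good_canon:
  "\<forall>m\<in>set M. fst m \<ge> 2 \<Longrightarrow> good M \<Longrightarrow> \<exists>C. mset C = mset M \<and> canon 1 C"
proof (induction "length M" arbitrary: M rule: less_induct)
  case less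
  note sh = less.prems(1)
  have gM: "SS M = {0..<1 + cs M}" "card (SS M) = sz M" using less.prems(2) unfolding good_def by auto
  show ?case
  proof (cases "M = []")
    case True then show ?thesis by auto
  next
    case False
    have dpos: "\<forall>m\<in>set M. snd m > 0"
    proof (rule ccontr)
      assume "\<not> (\<forall>m\<in>set M. snd m > 0)"
      then obtain m where m: "m \<in> set M" "snd m = 0" by auto
      obtain M0 where M0: "mset M = mset (m # M0)" using mem_decomp[OF m(1)] by blast
      have pos: "fst m > 0" using m(1) sh by force
      have "cell m = {0}"
      proof
        show "cell m \<subseteq> {0}" unfolding cell_def using m(2) by auto
        have "0 * snd m \<in> cell m" unfolding cell_def using pos by blast
        then show "{0} \<subseteq> cell m" by simp
      qed
      then have "SS M = SS M0" using SS_Cons_mset[OF M0] by simp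
      moreover have "sz M = fst m * sz M0" using sz_mset[OF M0] by (simp add: sz_Cons)
      moreover have "sz M0 > 0"
      proof (rule sz_pos)
        have "set M0 \<subseteq> set M" using mset_eq_setD[OF M0] by auto
        then show "\<forall>m\<in>set M0. 0 < fst m" using sh by fastforce
      qed
      moreover have "fst m \<ge> 2" using sh m by auto
      ultimately have "card (SS M) < sz M"
      proof -
        assume a: "SS M = SS M0" "sz M = fst m * sz M0" "sz M0 > 0" "fst m \<ge> 2"
        have le: "card (SS M) \<le> sz M0" using a(1) card_SS[of M0] by simp
        have "1 * sz M0 < fst m * sz M0" using a(3,4) by (intro mult_strict_right_mono) auto
        then have lt: "sz M0 < fst m * sz M0" by (simp only: mult_1)
        show ?thesis using a(2) lt le by linarith
      qed
      then show False using gM by simp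
    qed
    have csM: "cs M \<ge> 1"
    proof -
      obtain m where m: "m \<in> set M" using False by (meson list.set_sel(1))
      obtain M0 where M0: "mset M = mset (m # M0)" using mem_decomp[OF m(1)] by blast
      have g1: "(fst m - 1) * snd m \<ge> 1" using m sh dpos by auto
      have "cs M = (fst m - 1) * snd m + cs M0" using cs_mset[OF M0] by (simp add: cs_Cons)
      then show ?thesis using g1 by linarith
    qed
    then have "1 \<in> SS M" using gM by simp
    then have "\<exists>m\<in>set M. 0 < snd m \<and> snd m \<le> 1" using SS_pos[of 1 M] by simp
    then obtain m1 where m1': "m1 \<in> set M" "0 < snd m1" "snd m1 \<le> 1" by blast
    then have m1: "m1 \<in> set M" "snd m1 = 1" by auto
    define s1 where "s1 = fst m1"
    have s1: "s1 \<ge> 2" using sh m1 unfolding s1_def by auto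
    have m1e: "m1 = (s1, 1)" using m1(2) unfolding s1_def by (cases m1) simp
    obtain M0 where M0: "mset M = mset ((s1, 1) # M0)" using mem_decomp[OF m1(1)] unfolding m1e by blast
    have setM0: "set M0 \<subseteq> set M" using mset_eq_setD[OF M0] by auto
    show ?thesis
    proof (cases "M0 = []")
      case True
      then have "mset M = mset [(s1, 1)]" using M0 by simp
      moreover have "canon 1 [(s1, 1)]" by simp
      ultimately show ?thesis by metis
    next
      case False
      obtain m where m: "m \<in> set M0" using False by (meson list.set_sel(1))
      obtain M00 where M00: "mset M0 = mset (m # M00)" using mem_decomp[OF m] by blast
      have "(fst m - 1) * snd m \<ge> 1" using m setM0 sh dpos by fastforce
      moreover have "cs M0 = (fst m - 1) * snd m + cs M00" using cs_mset[OF M00] by (simp add: cs_Cons)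
      ultimately have "cs M0 \<ge> 1" by linarith
      moreover have "cs M = (s1 - 1) + cs M0" using cs_mset[OF M0] by (simp add: cs_Cons)
      ultimately have "s1 < 1 + cs M" using s1 by linarith
      then have "s1 \<in> SS M" using gM by simp
      then have "s1 \<in> msum (cell (s1, 1)) (SS M0)" using SS_Cons_mset[OF M0] by simp
      then obtain a w where aw: "a < s1" "w \<in> SS M0" "s1 = a + w"
        unfolding msum_iff cell_def by auto
      then have "w \<noteq> 0" by auto
      then obtain m2 where m2: "m2 \<in> set M0" "0 < snd m2" "snd m2 \<le> s1"
        using SS_pos[OF aw(2)] aw(3) by auto
      define s2 where "s2 = fst m2"
      have s2: "s2 \<ge> 2" using sh m2 setM0 unfolding s2_def by auto
      obtain M1 where M1: "mset M0 = mset (m2 # M1)" using mem_decomp[OF m2(1)] by blast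
      have MM1: "mset M = mset ((s1, 1) # m2 # M1)" using M0 M1 by simp
      have SSM: "SS M = msum (msum (cell (s1, 1)) (cell m2)) (SS M1)"
        using SS_mset[OF MM1] by (simp add: msum_assoc)
      have szM: "sz M = s1 * s2 * sz M1" using sz_mset[OF MM1] by (simp add: sz_Cons s2_def)
      have setM1: "set M1 \<subseteq> set M" using mset_eq_setD[OF MM1] by auto
      have szM1: "sz M1 > 0"
      proof (rule sz_pos)
        show "\<forall>m\<in>set M1. 0 < fst m" using sh setM1 by fastforce
      qed
      have d2: "snd m2 = s1"
      proof (rule ccontr)
        assume "snd m2 \<noteq> s1"
        then have "snd m2 < s1" using m2 by simp
        then have "card (msum (cell (s1, 1)) (cell m2)) < s1 * s2"
          using two_cells_card[of "snd m2" s1 s2] s2 unfolding s2_def by simp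
        then have lt: "card (msum (cell (s1, 1)) (cell m2)) * sz M1 < s1 * s2 * sz M1"
          using szM1 by (intro mult_strict_right_mono) auto
        have "card (SS M) \<le> card (msum (cell (s1, 1)) (cell m2)) * card (SS M1)"
          unfolding SSM by (intro card_msum) auto
        also have "\<dots> \<le> card (msum (cell (s1, 1)) (cell m2)) * sz M1"
          using card_SS[of M1] by (intro mult_le_mono2)
        finally have "card (SS M) < s1 * s2 * sz M1" using lt by linarith
        then show False using gM szM by simp
      qed
      have m2e: "m2 = (s2, s1)" using d2 unfolding s2_def by (cases m2) simp
      define M' where "M' = (s1 * s2, 1) # M1"
      have e1: "SS M' = SS M" using SSM merge_cells[of s1 s2] s1 m2e unfolding M'_def by simp
      have e2: "sz M' = sz M" using szM unfolding M'_def by (simp add: sz_Cons)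
      have e3: "cs M' = cs M"
      proof -
        have "cs M = (s1 - 1) + (s2 - 1) * s1 + cs M1" using cs_mset[OF MM1] m2e by (simp add: cs_Cons)
        moreover have "(s1 - 1) + (s2 - 1) * s1 = s1 * s2 - 1"
        proof -
          obtain a where a: "s1 = Suc a" using s1 by (cases s1) auto
          obtain b where b: "s2 = Suc b" using s2 by (cases s2) auto
          show ?thesis unfolding a b by simp
        qed
        ultimately show ?thesis unfolding M'_def by (simp add: cs_Cons)
      qed
      have gM': "good M'" using less.prems(2) unfolding good_def e1 e2 e3 .
      have "s1 * 1 \<le> s1 * s2" using s2 by (intro mult_le_mono2) simp
      then have "s1 \<le> s1 * s2" by (simp only: mult_1_right)
      then have "2 \<le> s1 * s2" using s1 by linarith
      then have shM': "\<forall>m\<in>set M'. fst m \<ge> 2" unfolding M'_def using setM1 sh s1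
        by auto
      have "size (mset M) = size (mset ((s1, 1) # m2 # M1))" using MM1 by simp
      then have "length M = Suc (Suc (length M1))" by simp
      then have "length M' < length M" unfolding M'_def by simp
      then obtain C' where C': "mset C' = mset M'" "canon 1 C'" using less.hyps shM' gM' by blast
      have setC': "set C' = set M'" using C'(1) by (metis set_mset_mset)
      obtain c C'' where cC: "C' = c # C''" using C'(1) unfolding M'_def by (cases C') auto
      have cc: "snd c = 1" "canon (fst c) C''" using C'(2) cC by auto
      have fc: "fst c \<ge> 2" using shM' setC' cC by auto
      have "(s1 * s2, 1) = c"
      proof (rule ccontr)
        assume "(s1 * s2, 1) \<noteq> c"
        then have "(s1 * s2, 1) \<in> set C''" using setC' cC unfolding M'_def by auto
        moreover have "\<forall>m\<in>set C''. 0 < fst m"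
        proof
          fix m assume "m \<in> set C''"
          then have "m \<in> set M'" using setC' cC by auto
          then show "0 < fst m" using shM' by fastforce
        qed
        then have "\<forall>m\<in>set C''. fst c \<le> snd m"
          using canon_ge[OF cc(2)] fc by simp
        ultimately have "fst c \<le> snd (s1 * s2, 1::nat)" by blast
        then show False using fc by simp
      qed
      then have C'': "mset C'' = mset M1" using C'(1) cC unfolding M'_def by auto
      define C where "C = (s1, 1) # (s2, s1) # C''"
      have "canon 1 C" unfolding C_def using cc \<open>(s1 * s2, 1) = c\<close>[symmetric] by simp
      moreover have "mset C = mset M" unfolding C_def using MM1 C'' m2e by simp
      ultimately show ?thesis by blast
    qed
  qed
qed


fun chainp :: "nat \<Rightarrow> layout \<Rightarrow> nat \<Rightarrow> bool" where
  "chainp p [] N = (p dvd N)"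
| "chainp p (m # L) N = (p dvd snd m \<and> chainp (fst m * snd m) L N)"

fun chain0 :: "nat \<Rightarrow> layout \<Rightarrow> bool" where
  "chain0 N [] = True"
| "chain0 N [m] = (fst m * snd m dvd N)"
| "chain0 N (m # m' # L) = (fst m * snd m dvd snd m' \<and> chain0 N (m' # L))"

lemma chainp_weaken: "chainp q L N \<Longrightarrow> p dvd q \<Longrightarrow> chainp p L N"
  by (cases L) (auto intro: dvd_trans)

lemma chainp_chain0: "chainp p L N \<Longrightarrow> chain0 N L"
proof (induction N L arbitrary: p rule: chain0.induct)
  case (1 N) then show ?case by simp
next
  case (2 N m) then show ?case by simp
next
  case (3 N m m' L)
  then have "fst m * snd m dvd snd m'" "chainp (fst m * snd m) (m' # L) N" by auto
  then show ?case using "3.IH" by simp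
qed

lemma chain0_chainp: "chain0 N (m # L) \<Longrightarrow> chainp (fst m * snd m) L N"
  by (induction L arbitrary: m) auto

lemma chain0_chainp1: "chain0 N L \<Longrightarrow> chainp 1 L N"
  by (cases L) (auto dest: chain0_chainp)

lemma all_nat_split: "(\<forall>i::nat. P i) \<longleftrightarrow> P 0 \<and> (\<forall>i. P (Suc i))"
  by (metis not0_implies_Suc)

lemma chain0_iff: "chain0 N L \<longleftrightarrow>
  ((\<forall>i. i + 1 < length L \<longrightarrow> fst (L ! i) * snd (L ! i) dvd snd (L ! (i + 1))) \<and>
   (0 < length L \<longrightarrow> fst (L ! (length L - 1)) * snd (L ! (length L - 1)) dvd N))"
proof (induction N L rule: chain0.induct)
  case (1 N) then show ?case by simp
next
  case (2 N m) then show ?case by simp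
next
  case (3 N m m' L)
  have e: "(\<forall>i. i + 1 < length (m # m' # L) \<longrightarrow> fst ((m # m' # L) ! i) * snd ((m # m' # L) ! i) dvd snd ((m # m' # L) ! (i + 1)))
     \<longleftrightarrow> fst m * snd m dvd snd m' \<and>
       (\<forall>i. i + 1 < length (m' # L) \<longrightarrow> fst ((m' # L) ! i) * snd ((m' # L) ! i) dvd snd ((m' # L) ! (i + 1)))"
    by (subst all_nat_split) simp
  have f: "(m # m' # L) ! (length (m # m' # L) - 1) = (m' # L) ! (length (m' # L) - 1)" by simp
  show ?case unfolding e f "3.IH" chain0.simps by simp
qed

lemma sorted_snd: "sorted (map snd (sort_layout L))"
proof -
  have "sorted (map (\<lambda>(s, d). (d, s)) (sort_layout L))" unfolding sort_layout_def by simp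
  then have "sorted_wrt (\<lambda>x y. (\<lambda>(s, d). (d, s)) x \<le> (\<lambda>(s, d). (d, s)) y) (sort_layout L)"
    by (simp only: sorted_map)
  then have "sorted_wrt (\<lambda>x y. snd x \<le> snd y) (sort_layout L)"
    by (rule sorted_wrt_mono_rel[rotated]) (auto simp: less_eq_prod_def split: prod.splits)
  then show ?thesis by (simp only: sorted_map)
qed

lemma sub_remove: "A \<subseteq># add_mset c B \<Longrightarrow> c \<notin># A \<Longrightarrow> A \<subseteq># B"
proof (rule mset_subset_eqI)
  fix x assume a: "A \<subseteq># add_mset c B" "c \<notin># A"
  have "count A x \<le> count (add_mset c B) x" using a(1) by (rule mset_subset_eq_count)
  then show "count A x \<le> count B x"
    using a(2) by (cases "x = c") (auto simp: not_in_iff)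
qed

lemma canon_chain: "canon p C \<Longrightarrow> p > 0 \<Longrightarrow> \<forall>m\<in>set C. fst m \<ge> 2 \<Longrightarrow> sorted (map snd L)
  \<Longrightarrow> mset L \<subseteq># mset C \<Longrightarrow> chainp p L (p * sz C)"
proof (induction C arbitrary: p L)
  case Nil
  then have "L = []" by simp
  then show ?case by (simp add: sz_def)
next
  case (Cons c C)
  have c: "snd c = p" "canon (p * fst c) C" using Cons.prems(1) by auto
  have fc: "fst c \<ge> 2" using Cons.prems(3) by auto
  have pc: "p * fst c > 0" using Cons.prems(2) fc by auto
  have shC: "\<forall>m\<in>set C. fst m \<ge> 2" using Cons.prems(3) by auto
  have Nq: "p * sz (c # C) = p * fst c * sz C" by (simp add: sz_Cons)
  show ?case
  proof (cases L)
    case Nil then show ?thesis by simp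
  next
    case (Cons l L')
    note LL = this
    have sL': "sorted (map snd L')" using Cons.prems(4) LL by simp
    show ?thesis
    proof (cases "l = c")
      case True
      then have "mset L' \<subseteq># mset C" using Cons.prems(5) LL by simp
      then have ch: "chainp (p * fst c) L' (p * fst c * sz C)" using Cons.IH[OF c(2) pc shC sL'] by blast
      have cm: "fst c * p = p * fst c" by (rule mult.commute)
      show ?thesis unfolding Nq LL True chainp.simps c(1) cm using ch by simp
    next
      case False
      have "l \<in># mset (c # C)" using Cons.prems(5) LL by (auto dest: mset_subset_eqD)
      then have lC: "l \<in> set C" using False by simp
      have "\<forall>m\<in>set C. p * fst c \<le> snd m"
      proof -
        have "\<forall>m\<in>set C. 0 < fst m" using shC by fastforce
        then show ?thesis using canon_ge[OF c(2) pc] by simp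
      qed
      then have "snd l \<ge> p * fst c" using lC by auto
      moreover have "p * 1 < p * fst c" using fc Cons.prems(2) by (intro mult_strict_left_mono) auto
      ultimately have gt: "snd l > p" by linarith
      have "\<forall>m\<in>set L'. snd l \<le> snd m" using Cons.prems(4) LL by simp
      then have "c \<notin> set L" using gt c(1) LL False by auto
      then have "mset L \<subseteq># mset C" using Cons.prems(5) sub_remove[of "mset L" c "mset C"] by simp
      then have "chainp (p * fst c) L (p * fst c * sz C)" using Cons.IH[OF c(2) pc shC Cons.prems(4)] by blast
      then have "chainp p L (p * fst c * sz C)" by (rule chainp_weaken) simp
      then show ?thesis unfolding Nq .
    qed
  qed
qed

fun gaps :: "nat \<Rightarrow> layout \<Rightarrow> nat \<Rightarrow> layout" where
  "gaps p [] N = [(N div p, p)]"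
| "gaps p (m # L) N = (snd m div p, p) # gaps (fst m * snd m) L N"

fun gen :: "nat \<Rightarrow> layout \<Rightarrow> nat \<Rightarrow> layout" where
  "gen p [] N = [(N div p, p)]"
| "gen p (m # L) N = (snd m div p, p) # m # gen (fst m * snd m) L N"

lemma mset_gen: "mset (gen p L N) = mset L + mset (gaps p L N)"
  by (induction L arbitrary: p) auto

lemma set_gaps: "set (gaps p L N) \<subseteq> set (gen p L N)"
  by (induction L arbitrary: p) auto

lemma chainp_zero: "chainp 0 L N \<Longrightarrow> N = 0"
  by (induction L) auto

lemma gen_props: "chainp p L N \<Longrightarrow> p > 0 \<Longrightarrow> N > 0 \<Longrightarrow> \<forall>m\<in>set L. fst m > 0 \<Longrightarrow>
  canon p (gen p L N) \<and> (\<forall>m\<in>set (gen p L N). fst m > 0) \<and> p * sz (gen p L N) = N"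
proof (induction L arbitrary: p)
  case Nil
  then obtain k where k: "N = p * k" by (auto elim: dvdE)
  then have "k > 0" using Nil by auto
  then show ?case using Nil k by (simp add: sz_def)
next
  case (Cons m L)
  have h: "p dvd snd m" "chainp (fst m * snd m) L N" using Cons.prems(1) by auto
  have q: "fst m * snd m > 0"
  proof (rule ccontr)
    assume "\<not> fst m * snd m > 0"
    then have "fst m * snd m = 0" by simp
    then have "chainp 0 L N" using h(2) by (simp only:)
    then show False using chainp_zero Cons.prems(3) by blast
  qed
  obtain k where k: "snd m = p * k" using h(1) by (auto elim: dvdE)
  have kpos: "k > 0" using q k by auto
  have IH: "canon (fst m * snd m) (gen (fst m * snd m) L N)"
      "\<forall>x\<in>set (gen (fst m * snd m) L N). fst x > 0"
      "fst m * snd m * sz (gen (fst m * snd m) L N) = N"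
    using Cons.IH[OF h(2) q Cons.prems(3)] Cons.prems(4) by auto
  have dk: "snd m div p = k" using k Cons.prems(2) by simp
  have "canon p (gen p (m # L) N)"
  proof -
    have "canon (p * k * fst m) (gen (fst m * snd m) L N)"
      using IH(1) k by (metis mult.commute)
    then show ?thesis using dk k by simp
  qed
  moreover have "\<forall>x\<in>set (gen p (m # L) N). fst x > 0" using IH(2) dk kpos Cons.prems(4) by auto
  moreover have "p * sz (gen p (m # L) N) = N"
  proof -
    have "p * sz (gen p (m # L) N) = p * k * fst m * sz (gen (fst m * snd m) L N)"
      using dk by (simp add: sz_Cons)
    also have "\<dots> = fst m * snd m * sz (gen (fst m * snd m) L N)" using k by (simp add: ac_simps)
    finally show ?thesis using IH(3) by simp
  qed
  ultimately show ?case by blast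
qed

lemma squeeze_ge2: "flat_layout A \<Longrightarrow> \<forall>m\<in>set (squeeze A). fst m \<ge> 2"
proof
  fix m assume "flat_layout A" "m \<in> set (squeeze A)"
  then have "fst m > 0" "fst m \<noteq> 1" unfolding flat_layout_def squeeze_def by auto
  then show "fst m \<ge> 2" by linarith
qed

theorem mainTheorem14:
  fixes A :: layout and N :: nat
  assumes "flat_layout A" and "N > 0"
  shows "(\<exists>B. is_complement N A B) \<longleftrightarrow> complementable N A"
proof -
  define L where "L = sort_layout (squeeze A)"
  have mL: "mset L = mset (squeeze A)" unfolding L_def sort_layout_def by simp
  have shA: "\<forall>m\<in>set (squeeze A). fst m \<ge> 2" using assms(1) by (rule squeeze_ge2)
  have setL: "set L = set (squeeze A)" using mL by (metis set_mset_mset)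
  have shL: "\<forall>m\<in>set L. fst m \<ge> 2" using shA setL by simp
  have sL: "sorted (map snd L)" unfolding L_def by (rule sorted_snd)
  have comp: "complementable N A \<longleftrightarrow> chain0 N L"
    unfolding complementable_def chain0_iff L_def Let_def by simp
  show ?thesis
  proof
    assume "\<exists>B. is_complement N A B"
    then obtain B where B: "flat_layout B" "compact (concat_layout A B)" "lsize A * lsize B = N"
      unfolding is_complement_def by blast
    have fAB: "flat_layout (A @ B)" using assms(1) B(1) unfolding flat_layout_def by auto
    have "good (A @ B)" using B(2) compact_good[OF fAB] unfolding concat_layout_def by simp
    then have g: "good (squeeze (A @ B))" using good_squeeze by simp
    have sh: "\<forall>m\<in>set (squeeze (A @ B)). fst m \<ge> 2" using fAB by (rule squeeze_ge2)
    obtain C where C: "mset C = mset (squeeze (A @ B))" "canon 1 C" using good_canon[OF sh g] by blast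
    have "sz C = sz (A @ B)" using sz_mset[OF C(1)] sz_squeeze[of "A @ B"] by simp
    also have "\<dots> = lsize A * lsize B" by (simp add: lsize_sz sz_def)
    finally have szC: "sz C = N" using B(3) by simp
    have setC: "set C = set (squeeze (A @ B))" using C(1) by (metis set_mset_mset)
    have shC: "\<forall>m\<in>set C. fst m \<ge> 2" using sh setC by simp
    have "mset (squeeze A) \<subseteq># mset (squeeze (A @ B))" unfolding squeeze_def by simp
    then have "mset L \<subseteq># mset C" using mL C(1) by simp
    then have "chainp 1 L (1 * sz C)" using canon_chain[OF C(2) _ shC sL] by simp
    then have "chain0 N L" using szC chainp_chain0 by simp
    then show "complementable N A" using comp by simp
  next
    assume "complementable N A"
    then have ch: "chain0 N L" using comp by simp
    then have cp: "chainp 1 L N" by (rule chain0_chainp1)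
    have posL: "\<forall>m\<in>set L. fst m > 0" using shL by fastforce
    have GP: "canon 1 (gen 1 L N)" "\<forall>m\<in>set (gen 1 L N). fst m > 0" "1 * sz (gen 1 L N) = N"
      using gen_props[OF cp _ assms(2) posL] by auto
    define B where "B = gaps 1 L N"
    have fB: "flat_layout B" unfolding flat_layout_def B_def using GP(2) set_gaps by blast
    have fAB: "flat_layout (A @ B)" using assms(1) fB unfolding flat_layout_def by auto
    have mg: "mset (gen 1 L N) = mset L + mset B" unfolding B_def by (rule mset_gen)
    have gg: "good (gen 1 L N)" using canon_good[OF GP(1) GP(2)] .
    have "mset (squeeze (A @ B)) = mset (squeeze (gen 1 L N))"
      unfolding squeeze_def using mg mL unfolding squeeze_def by (simp add: filter_filter_mset)
    then have "good (squeeze (A @ B))" using gg good_mset good_squeeze by metis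
    then have "good (A @ B)" using good_squeeze by simp
    then have "compact (concat_layout A B)" using compact_good[OF fAB] unfolding concat_layout_def by simp
    moreover have "lsize A * lsize B = N"
    proof -
      have "sz (gen 1 L N) = sz (L @ B)" using mg by (intro sz_mset) simp
      also have "\<dots> = sz L * sz B" by (simp add: sz_def)
      also have "sz L = sz A" using sz_mset[OF mL] sz_squeeze[of A] by simp
      finally show ?thesis using GP(3) by (simp add: lsize_sz)
    qed
    ultimately show "\<exists>B. is_complement N A B" using fB unfolding is_complement_def by blast
  qed
qed


end
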